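(* Let $f\in\mathbb C[x,y]$ be a non-constant polynomial. Then there exists a polynomial $m\in\mathbb C[t]$ such that $m(f)$ belongs to the gradient ideal $(f_x,f_y)\subset\mathbb C[x,y]$, and such that $m(c)=0$ if and only if $c$ is a critical value of $f$. *)

theory Defs
  imports "HOL-Computational_Algebra.Polynomial"
begin

text \<open>C[x,y] is represented as (C[x])[y], i.e. type complex poly poly:
  f = sum_j p_j(x) y^j.\<close>

type_synonym bipoly = "complex poly poly"

definition eval2 :: "bipoly \<Rightarrow> complex \<Rightarrow> complex \<Rightarrow> complex" where
  "eval2 f a b = poly (map_poly (\<lambda>p. poly p a) f) b"

definition dx :: "bipoly \<Rightarrow> bipoly" where
  "dx f = map_poly pderiv f"

definition dy :: "bipoly \<Rightarrow> bipoly" where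
  "dy f = pderiv f"

definition const2 :: "complex \<Rightarrow> bipoly" where
  "const2 c = [:[:c:]:]"

definition subst_bipoly :: "complex poly \<Rightarrow> bipoly \<Rightarrow> bipoly" where
  "subst_bipoly m f = poly (map_poly const2 m) f"

definition in_gradient_ideal :: "bipoly \<Rightarrow> bipoly \<Rightarrow> bool" where
  "in_gradient_ideal g f \<longleftrightarrow> (\<exists>a b. g = a * dx f + b * dy f)"

definition critical_value :: "bipoly \<Rightarrow> complex \<Rightarrow> bool" where
  "critical_value f c \<longleftrightarrow>
     (\<exists>a b. eval2 (dx f) a b = 0 \<and> eval2 (dy f) a b = 0 \<and> eval2 f a b = c)"

end

theory Submission
  imports Defs "HOL-Computational_Algebra.Computational_Algebra" "HOL-Computational_Algebra.Field_as_Ring"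
begin


definition rhom :: "('a::comm_ring_1 \<Rightarrow> 'b::comm_ring_1) \<Rightarrow> bool" where
  "rhom h \<longleftrightarrow> (\<forall>a b. h (a + b) = h a + h b) \<and> (\<forall>a b. h (a * b) = h a * h b) \<and> h 1 = 1"

lemma rhom_add: "rhom h \<Longrightarrow> h (a + b) = h a + h b" by (simp add: rhom_def)
lemma rhom_mult: "rhom h \<Longrightarrow> h (a * b) = h a * h b" by (simp add: rhom_def)
lemma rhom_1: "rhom h \<Longrightarrow> h 1 = 1" by (simp add: rhom_def)
lemma rhom_0: "rhom h \<Longrightarrow> h 0 = 0"
  using rhom_add[of h 0 0] by simp
lemma rhom_uminus: "rhom h \<Longrightarrow> h (- a) = - h a"
  using rhom_add[of h a "-a"] rhom_0[of h] by (simp add: eq_neg_iff_add_eq_0 add.commute)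
lemma rhom_diff: "rhom h \<Longrightarrow> h (a - b) = h a - h b"
  using rhom_add[of h a "-b"] rhom_uminus[of h b] by simp
lemma rhom_sum: "rhom h \<Longrightarrow> h (sum F A) = sum (\<lambda>x. h (F x)) A"
  by (induction A rule: infinite_finite_induct) (auto simp: rhom_0 rhom_add)
lemma rhom_prod_mset: "rhom h \<Longrightarrow> h (\<Prod>x\<in>#M. F x) = (\<Prod>x\<in>#M. h (F x))"
  by (induction M) (auto simp: rhom_1 rhom_mult)
lemma rhom_power: "rhom h \<Longrightarrow> h (a ^ n) = h a ^ n"
  by (induction n) (auto simp: rhom_1 rhom_mult)
lemma rhom_of_nat: "rhom h \<Longrightarrow> h (of_nat n) = of_nat n"
  by (induction n) (auto simp: rhom_1 rhom_add rhom_0)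
lemma rhom_comp: "rhom h \<Longrightarrow> rhom k \<Longrightarrow> rhom (\<lambda>x. k (h x))"
  by (simp add: rhom_def)

lemma rhom_poly_eval: "rhom (\<lambda>p. poly p z)"
  by (simp add: rhom_def)

lemma rhom_map_poly:
  assumes "rhom h" shows "rhom (map_poly h)"
proof -
  have h0: "h 0 = 0" using assms by (rule rhom_0)
  have "map_poly h (a + b) = map_poly h a + map_poly h b" for a b
    by (rule poly_eqI) (simp add: coeff_map_poly h0 rhom_add[OF assms])
  moreover have "map_poly h (a * b) = map_poly h a * map_poly h b" for a b
    by (rule poly_eqI) (simp add: coeff_map_poly h0 coeff_mult rhom_sum[OF assms] rhom_mult[OF assms])
  moreover have "map_poly h 1 = 1" using rhom_1[OF assms] by simp
  ultimately show ?thesis by (simp add: rhom_def)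
qed

lemma rhom_poly_hom:
  assumes "rhom h" shows "h (poly P z) = poly (map_poly h P) (h z)"
proof (induction P)
  case (pCons a P)
  then show ?case
    by (simp add: map_poly_pCons rhom_0[OF assms] rhom_add[OF assms] rhom_mult[OF assms])
qed (simp add: rhom_0[OF assms])

lemma rhom_pderiv:
  assumes "rhom h" shows "map_poly h (pderiv p) = pderiv (map_poly h p)"
  by (rule poly_eqI) (simp add: coeff_map_poly coeff_pderiv rhom_0[OF assms] rhom_mult[OF assms] rhom_of_nat[OF assms] del: of_nat_Suc)

lemma rhom_const: "rhom (\<lambda>c::'a::comm_ring_1. [:c:])"
  by (simp add: rhom_def)

lemma rhom_const2: "rhom const2"
  by (simp add: rhom_def const2_def pCons_one)



lemma L1:
  fixes p q :: "'a::{factorial_ring_gcd,semiring_gcd_mult_normalize} poly"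
  assumes nz: "p \<noteq> 0 \<or> q \<noteq> 0"
    and cd: "\<And>d. d dvd p \<Longrightarrow> d dvd q \<Longrightarrow> degree d = 0"
  shows "\<exists>r a b. r \<noteq> 0 \<and> a * p + b * q = [:r:]"
proof -
  define S where "S = {h. h \<noteq> 0 \<and> (\<exists>a b. h = a * p + b * q)}"
  have "S \<noteq> {}"
  proof (cases "p \<noteq> 0")
    case True
    have "p = 1 * p + 0 * q" by simp
    with True have "p \<in> S" unfolding S_def by blast
    then show ?thesis by auto
  next
    case False
    have "q = 0 * p + 1 * q" by simp
    with False nz have "q \<in> S" unfolding S_def by blast
    then show ?thesis by auto
  qed
  then obtain h where hS: "h \<in> S" and hmin: "\<And>h'. h' \<in> S \<Longrightarrow> degree h \<le> degree h'"
    using ex_has_least_nat[of "\<lambda>h. h \<in> S" _ degree] by blast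
  from hS obtain a b where h0: "h \<noteq> 0" and hab: "h = a * p + b * q" unfolding S_def by auto
  show ?thesis
  proof (cases "degree h = 0")
    case True
    then have "h = [:coeff h 0:]" by (rule degree_0_id[symmetric])
    moreover have "coeff h 0 \<noteq> 0" using h0 True by (metis leading_coeff_0_iff)
    ultimately show ?thesis using hab by metis
  next
    case False
    have key: "primitive_part h dvd p'" if p': "p' = p \<or> p' = q" for p'
    proof -
      obtain c k where c: "c \<noteq> 0" and ck: "smult c p' = h * k + pseudo_mod p' h"
        using pseudo_mod(1)[OF h0, of p'] by blast
      have deg: "pseudo_mod p' h = 0 \<or> degree (pseudo_mod p' h) < degree h"
        using pseudo_mod(2)[OF h0] by blast
      have "pseudo_mod p' h = smult c p' - h * k" using ck by simp
      also have "\<dots> = ([:c:] * (if p' = p then 1 else 0) - k * a) * p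
                     + ([:c:] * (if p' = p then 0 else 1) - k * b) * q"
        using p' by (auto simp: hab algebra_simps)
      finally have "pseudo_mod p' h = 0"
        using deg hmin[of "pseudo_mod p' h"] unfolding S_def by fastforce
      then have "h dvd smult c p'" using ck by simp
      moreover have "primitive_part h dvd h"
        by (metis content_times_primitive_part dvd_smult dvd_refl)
      ultimately have "primitive_part h dvd smult c p'" by (rule dvd_trans[rotated])
      then have "fract_poly (primitive_part h) dvd smult (to_fract c) (fract_poly p')"
        by (metis fract_poly_dvd fract_poly_smult)
      then have "fract_poly (primitive_part h) dvd fract_poly p'"
        using c by (simp add: dvd_smult_iff)
      then show "primitive_part h dvd p'"
        by (rule fract_poly_dvdD) (use h0 in simp)
    qed
    have "degree (primitive_part h) = 0" using key cd by blast
    with False show ?thesis by simp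
  qed
qed



definition isid :: "'a::comm_ring_1 set \<Rightarrow> bool" where
  "isid I \<longleftrightarrow> 0 \<in> I \<and> (\<forall>a\<in>I. \<forall>b\<in>I. a + b \<in> I) \<and> (\<forall>a\<in>I. \<forall>c. c * a \<in> I)"

definition pl :: "'a::comm_ring_1 set \<Rightarrow> 'a \<Rightarrow> 'a set" where
  "pl I A = {i + c * A | i c. i \<in> I}"

lemma isid_pl: "isid I \<Longrightarrow> isid (pl I A)"
  unfolding isid_def pl_def
  apply safe
    apply (rule exI[of _ 0], rule exI[of _ 0], simp)
   apply (metis (no_types, lifting) add.assoc add.left_commute distrib_right)
  apply (metis (no_types, lifting) distrib_left mult.assoc)
  done

lemma pl_mult:
  assumes "isid I" "h1 \<in> pl I A" "h2 \<in> pl I B" shows "h1 * h2 \<in> pl I (A * B)"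
proof -
  obtain i1 c1 where 1: "h1 = i1 + c1 * A" "i1 \<in> I" using assms(2) unfolding pl_def by auto
  obtain i2 c2 where 2: "h2 = i2 + c2 * B" "i2 \<in> I" using assms(3) unfolding pl_def by auto
  have "h1 * h2 = (h2 * i1 + (c1 * A) * i2) + (c1 * c2) * (A * B)"
    by (simp add: 1 2 algebra_simps)
  moreover have "h2 * i1 + (c1 * A) * i2 \<in> I" using assms(1) 1 2 unfolding isid_def by blast
  ultimately show ?thesis unfolding pl_def by blast
qed

lemma pl_prod:
  assumes "isid I" "\<And>x. x \<in># M \<Longrightarrow> F x \<in> pl I (G x)"
  shows "(\<Prod>x\<in>#M. F x) \<in> pl I (\<Prod>x\<in>#M. G x)"
  using assms(2)
proof (induction M)
  case empty
  have "(\<Prod>x\<in>#{#}. F x) = 0 + 1 * (\<Prod>x\<in>#{#}. G x)" by simp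
  moreover have "0 \<in> I" using assms(1) unfolding isid_def by blast
  ultimately show ?case unfolding pl_def by blast
next
  case (add x M)
  then show ?case using pl_mult[OF assms(1)] by simp
qed

lemma pl_sub:
  assumes "isid I" "A \<in> I" "h \<in> pl I A" shows "h \<in> I"
  using assms unfolding pl_def isid_def by auto

lemma in_pl: "isid I \<Longrightarrow> h \<in> I \<Longrightarrow> h \<in> pl I A"
  unfolding pl_def by (rule CollectI, rule exI[of _ h], rule exI[of _ 0]) simp

lemma in_pl2: "isid I \<Longrightarrow> h = c * A \<Longrightarrow> h \<in> pl I A"
  unfolding pl_def isid_def by (rule CollectI, rule exI[of _ 0], rule exI[of _ c]) simp

lemma isid_gen2: "isid {a * p + b * q | a b. True}"
  unfolding isid_def
  apply safe
    apply (rule exI[of _ 0], rule exI[of _ 0], simp)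
   apply (metis (no_types, lifting) add.assoc add.left_commute distrib_right)
  apply (metis (no_types, lifting) distrib_left mult.assoc)
  done

abbreviation evx :: "complex \<Rightarrow> bipoly \<Rightarrow> complex poly" where
  "evx \<alpha> \<equiv> map_poly (\<lambda>c. poly c \<alpha>)"

abbreviation cy :: "complex poly \<Rightarrow> bipoly" where
  "cy \<equiv> map_poly (\<lambda>c. [:c:])"

lemma rhom_evx: "rhom (evx \<alpha>)"
  by (rule rhom_map_poly, rule rhom_poly_eval)

lemma rhom_cy: "rhom cy"
  by (rule rhom_map_poly, rule rhom_const)

lemma cy_const [simp]: "cy [:c:] = [:[:c:]:]"
  by (simp add: map_poly_pCons)

lemma K_dvd: "[:[:-\<alpha>, 1:]:] dvd (h - cy (evx \<alpha> h))"
proof -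
  have "[:-\<alpha>, 1:] dvd coeff (h - cy (evx \<alpha> h)) n" for n
  proof -
    have "coeff (cy (evx \<alpha> h)) n = [:poly (coeff h n) \<alpha>:]"
      by (simp add: coeff_map_poly)
    then have "coeff (h - cy (evx \<alpha> h)) n = coeff h n - [:poly (coeff h n) \<alpha>:]"
      by simp
    moreover have "poly (coeff h n - [:poly (coeff h n) \<alpha>:]) \<alpha> = 0" by simp
    ultimately show ?thesis by (metis poly_eq_0_iff_dvd)
  qed
  then show ?thesis by (simp add: const_poly_dvd_iff)
qed

lemma K0: "evx \<alpha> h = 0 \<Longrightarrow> [:[:-\<alpha>, 1:]:] dvd h"
  using K_dvd[of \<alpha> h] by simp

lemma Kf: "\<exists>k w. h - const2 (eval2 h \<alpha> \<beta>) = [:[:-\<alpha>, 1:]:] * k + cy [:-\<beta>, 1:] * w"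
proof -
  obtain k where k: "h - cy (evx \<alpha> h) = [:[:-\<alpha>, 1:]:] * k" using K_dvd[of \<alpha> h] by blast
  have "poly (evx \<alpha> h - [:eval2 h \<alpha> \<beta>:]) \<beta> = 0" by (simp add: eval2_def)
  then obtain w where w: "evx \<alpha> h - [:eval2 h \<alpha> \<beta>:] = [:-\<beta>, 1:] * w"
    by (metis dvdE poly_eq_0_iff_dvd)
  have "cy (evx \<alpha> h) - const2 (eval2 h \<alpha> \<beta>) = cy (evx \<alpha> h - [:eval2 h \<alpha> \<beta>:])"
    by (simp add: rhom_diff[OF rhom_cy] const2_def)
  also have "\<dots> = cy [:-\<beta>, 1:] * cy w" unfolding w by (rule rhom_mult[OF rhom_cy])
  finally have "h - const2 (eval2 h \<alpha> \<beta>) = [:[:-\<alpha>, 1:]:] * k + cy [:-\<beta>, 1:] * cy w"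
    using k by (simp add: algebra_simps)
  then show ?thesis by blast
qed



lemma rhom_S: "rhom (\<lambda>m. subst_bipoly m f)"
  unfolding subst_bipoly_def
  by (rule rhom_comp[OF rhom_map_poly[OF rhom_const2] rhom_poly_eval])

lemma S_lin: "subst_bipoly [:-c, 1:] f = f - const2 c"
  by (simp add: subst_bipoly_def map_poly_pCons const2_def pCons_one)

lemma X2_not_unit: "\<not> is_unit ([:[:-\<alpha>, 1:]:] :: bipoly)"
  by (simp add: is_unit_const_poly_iff is_unit_poly_iff)

lemma const_smult_eq: "[:smult c P:] = const2 c * [:P:]"
  by (simp add: const2_def)

lemma cy_smult_eq: "cy (smult c P) = const2 c * cy P"
proof -
  have "cy (smult c P) = cy ([:c:] * P)" by simp
  also have "\<dots> = cy [:c:] * cy P" by (rule rhom_mult[OF rhom_cy])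
  finally show ?thesis by (simp add: const2_def)
qed

lemma const2_inv_mult: "c \<noteq> 0 \<Longrightarrow> const2 (inverse c) * (const2 c * h) = h"
proof -
  assume "c \<noteq> 0"
  have "const2 (inverse c) * (const2 c * h) = const2 (inverse c * c) * h"
    by (simp add: rhom_mult[OF rhom_const2] mult.assoc)
  also have "\<dots> = h" using \<open>c \<noteq> 0\<close> by (simp add: const2_def pCons_one)
  finally show ?thesis .
qed

lemma lin_prod_nz: "(\<Prod>\<beta>\<in>#M. [:- c \<beta>, 1::'a::idom:]) \<noteq> 0"
  by (auto simp: prod_mset_zero_iff)

lemma M0:
  fixes p q f :: bipoly
  assumes cop: "coprime p q"
  shows "\<exists>m0. m0 \<noteq> 0 \<and> subst_bipoly m0 f \<in> {a * p + b * q | a b. True} \<and>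
    (\<forall>c. poly m0 c = 0 \<longrightarrow> (\<exists>\<alpha> \<beta>. eval2 p \<alpha> \<beta> = 0 \<and> eval2 q \<alpha> \<beta> = 0 \<and> eval2 f \<alpha> \<beta> = c))"
proof -
  define I0 where "I0 = {a * p + b * q | a b. True}"
  have I0: "isid I0" unfolding I0_def by (rule isid_gen2)
  have nz: "p \<noteq> 0 \<or> q \<noteq> 0" using cop by auto
  have cd: "degree d = 0" if "d dvd p" "d dvd q" for d
  proof -
    have "is_unit d" using coprime_common_divisor[OF cop that] .
    then show ?thesis by (auto simp: is_unit_poly_iff)
  qed
  obtain r a b where r0: "r \<noteq> 0" and rab: "a * p + b * q = [:r:]"
    using L1[OF nz cd] by blast
  have rI: "[:r:] \<in> I0" unfolding I0_def using rab[symmetric] by blast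
  define s where "s \<alpha> = gcd (evx \<alpha> p) (evx \<alpha> q)" for \<alpha>
  have s0: "s \<alpha> \<noteq> 0" for \<alpha>
  proof
    assume "s \<alpha> = 0"
    then have "evx \<alpha> p = 0" "evx \<alpha> q = 0" by (auto simp: s_def)
    then have "[:[:-\<alpha>, 1:]:] dvd p" "[:[:-\<alpha>, 1:]:] dvd q" by (auto intro: K0)
    then show False using coprime_common_divisor[OF cop] X2_not_unit by blast
  qed
  define F where "F \<alpha> = (\<Prod>\<beta>\<in>#proots (s \<alpha>). f - const2 (eval2 f \<alpha> \<beta>))" for \<alpha>
  have Fin: "F \<alpha> \<in> pl I0 [:[:-\<alpha>, 1:]:]" for \<alpha>
  proof -
    define I\<alpha> where "I\<alpha> = pl I0 [:[:-\<alpha>, 1:]:]"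
    have Ia: "isid I\<alpha>" unfolding I\<alpha>_def by (rule isid_pl[OF I0])
    have sI: "cy (s \<alpha>) \<in> I\<alpha>"
    proof -
      define u where "u = fst (bezout_coefficients (evx \<alpha> p) (evx \<alpha> q))"
      define v where "v = snd (bezout_coefficients (evx \<alpha> p) (evx \<alpha> q))"
      have uv: "u * evx \<alpha> p + v * evx \<alpha> q = s \<alpha>"
        unfolding u_def v_def s_def by (rule bezout_coefficients_fst_snd)
      obtain k1 where k1: "p - cy (evx \<alpha> p) = [:[:-\<alpha>, 1:]:] * k1" using K_dvd by blast
      obtain k2 where k2: "q - cy (evx \<alpha> q) = [:[:-\<alpha>, 1:]:] * k2" using K_dvd by blast
      have "cy (s \<alpha>) = cy u * cy (evx \<alpha> p) + cy v * cy (evx \<alpha> q)"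
        unfolding uv[symmetric] by (simp add: rhom_add[OF rhom_cy] rhom_mult[OF rhom_cy])
      also have "\<dots> = cy u * (p - (p - cy (evx \<alpha> p))) + cy v * (q - (q - cy (evx \<alpha> q)))"
        by simp
      also have "\<dots> = cy u * (p - [:[:-\<alpha>, 1:]:] * k1) + cy v * (q - [:[:-\<alpha>, 1:]:] * k2)"
        by (simp only: k1 k2)
      also have "\<dots> = (cy u * p + cy v * q) + (- (cy u * k1 + cy v * k2)) * [:[:-\<alpha>, 1:]:]"
        by (simp only: ring_distribs mult_ac diff_conv_add_uminus add_ac mult_minus_left mult_minus_right minus_add)
      finally show ?thesis unfolding I\<alpha>_def pl_def I0_def by blast
    qed
    have "F \<alpha> \<in> pl I\<alpha> (\<Prod>\<beta>\<in>#proots (s \<alpha>). cy [:-\<beta>, 1:])"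
      unfolding F_def
    proof (rule pl_prod[OF Ia])
      fix \<beta>
      obtain k w where kw: "f - const2 (eval2 f \<alpha> \<beta>) = [:[:-\<alpha>, 1:]:] * k + cy [:-\<beta>, 1:] * w"
        using Kf by blast
      have "[:[:-\<alpha>, 1:]:] * k \<in> I\<alpha>" unfolding I\<alpha>_def
        by (rule in_pl2[OF I0]) simp
      then show "f - const2 (eval2 f \<alpha> \<beta>) \<in> pl I\<alpha> (cy [:-\<beta>, 1:])"
        unfolding kw pl_def by (auto simp: mult.commute)
    qed
    moreover have "(\<Prod>\<beta>\<in>#proots (s \<alpha>). cy [:-\<beta>, 1:]) \<in> I\<alpha>"
    proof -
      have "(\<Prod>\<beta>\<in>#proots (s \<alpha>). cy [:-\<beta>, 1:]) = cy (\<Prod>\<beta>\<in>#proots (s \<alpha>). [:-\<beta>, 1:])"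
        by (simp add: rhom_prod_mset[OF rhom_cy])
      also have "\<dots> = const2 (inverse (lead_coeff (s \<alpha>))) * cy (s \<alpha>)"
        by (subst (2) complex_poly_decompose_multiset[symmetric, of "s \<alpha>"])
           (simp add: cy_smult_eq const2_inv_mult s0)
      finally show ?thesis using sI Ia unfolding isid_def by simp
    qed
    ultimately show ?thesis using pl_sub[OF Ia] unfolding I\<alpha>_def by blast
  qed
  define m0 where "m0 = (\<Prod>\<alpha>\<in>#proots r. \<Prod>\<beta>\<in>#proots (s \<alpha>). [:-eval2 f \<alpha> \<beta>, 1:])"
  have Sm0: "subst_bipoly m0 f = (\<Prod>\<alpha>\<in>#proots r. F \<alpha>)"
    unfolding m0_def F_def by (simp add: rhom_prod_mset[OF rhom_S] S_lin)
  have "(\<Prod>\<alpha>\<in>#proots r. F \<alpha>) \<in> pl I0 (\<Prod>\<alpha>\<in>#proots r. [:[:-\<alpha>, 1:]:])"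
    by (rule pl_prod[OF I0 Fin])
  moreover have "(\<Prod>\<alpha>\<in>#proots r. [:[:-\<alpha>, 1:]:]) \<in> I0"
  proof -
    have "(\<Prod>\<alpha>\<in>#proots r. [:[:-\<alpha>, 1:]:]) = [:\<Prod>\<alpha>\<in>#proots r. [:-\<alpha>, 1:]:]"
      by (simp add: rhom_prod_mset[OF rhom_const])
    also have "\<dots> = const2 (inverse (lead_coeff r)) * [:r:]"
    proof -
      have "[:r:] = [:smult (lead_coeff r) (\<Prod>\<alpha>\<in>#proots r. [:-\<alpha>, 1:]):]"
        using complex_poly_decompose_multiset[of r] by simp
      also have "\<dots> = const2 (lead_coeff r) * [:\<Prod>\<alpha>\<in>#proots r. [:-\<alpha>, 1:]:]"
        by (rule const_smult_eq)
      finally have rr: "[:r:] = const2 (lead_coeff r) * [:\<Prod>\<alpha>\<in>#proots r. [:-\<alpha>, 1:]:]" .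
      have lc: "lead_coeff r \<noteq> 0" using r0 by simp
      show ?thesis unfolding rr by (rule const2_inv_mult[OF lc, symmetric])
    qed
    finally have eq: "(\<Prod>\<alpha>\<in>#proots r. [:[:-\<alpha>, 1:]:]) = const2 (inverse (lead_coeff r)) * [:r:]" .
    show ?thesis unfolding eq using rI I0 unfolding isid_def by blast
  qed
  ultimately have m0I: "subst_bipoly m0 f \<in> I0" using pl_sub[OF I0] Sm0 by simp
  have m0nz: "m0 \<noteq> 0" unfolding m0_def
    using lin_prod_nz[of "eval2 f _"] by (auto simp: prod_mset_zero_iff)
  have roots: "\<exists>\<alpha> \<beta>. eval2 p \<alpha> \<beta> = 0 \<and> eval2 q \<alpha> \<beta> = 0 \<and> eval2 f \<alpha> \<beta> = c"
    if "poly m0 c = 0" for c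
  proof -
    from that obtain \<alpha> \<beta> where \<beta>: "\<beta> \<in># proots (s \<alpha>)" and c: "c = eval2 f \<alpha> \<beta>"
      unfolding m0_def by (auto simp: poly_prod_mset)
    have "poly (s \<alpha>) \<beta> = 0" using \<beta> s0[of \<alpha>] by simp
    moreover have "s \<alpha> dvd evx \<alpha> p" "s \<alpha> dvd evx \<alpha> q" unfolding s_def by auto
    ultimately have "poly (evx \<alpha> p) \<beta> = 0" "poly (evx \<alpha> q) \<beta> = 0"
      by (auto simp: poly_eq_0_iff_dvd intro: dvd_trans)
    then show ?thesis using c unfolding eval2_def by blast
  qed
  show ?thesis using m0nz m0I roots unfolding I0_def by blast
qed



lemma dx_add: "dx (a + b) = dx a + dx b"
  unfolding dx_def by (rule poly_eqI) (simp add: coeff_map_poly pderiv_add)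

lemma dx_diff: "dx (a - b) = dx a - dx b"
  unfolding dx_def by (rule poly_eqI) (simp add: coeff_map_poly pderiv_diff)

lemma dx_smult: "dx (smult c b) = smult (pderiv c) b + smult c (dx b)"
  unfolding dx_def by (rule poly_eqI) (simp add: coeff_map_poly pderiv_mult algebra_simps)

lemma dx_pCons: "dx (pCons c a) = pCons (pderiv c) (dx a)"
  unfolding dx_def by (simp add: map_poly_pCons)

lemma dx_mult: "dx (a * b) = dx a * b + a * dx b"
proof (induction a)
  case 0
  then show ?case by (simp add: dx_def)
next
  case (pCons c a)
  have "dx (pCons c a * b) = dx (smult c b + pCons 0 (a * b))" by simp
  also have "\<dots> = smult (pderiv c) b + smult c (dx b) + pCons 0 (dx a * b + a * dx b)"
    by (simp add: dx_add dx_smult dx_pCons pCons.IH)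
  also have "\<dots> = dx (pCons c a) * b + pCons c a * dx b"
    by (simp add: dx_pCons algebra_simps)
  finally show ?case .
qed

lemma dx_const: "dx [:e:] = [:pderiv e:]"
  unfolding dx_def by (simp add: map_poly_pCons)

definition phi :: "bipoly \<Rightarrow> complex poly poly \<Rightarrow> bipoly" where
  "phi f Q = poly (map_poly (\<lambda>c. [:c:]) Q) f"

lemma rhom_phi: "rhom (phi f)"
  unfolding phi_def by (rule rhom_comp[OF rhom_map_poly[OF rhom_const] rhom_poly_eval])

lemma phi_pCons: "phi f (pCons a Q) = [:a:] + f * phi f Q"
  by (simp add: phi_def map_poly_pCons)

lemma phi_pCons0: "phi f (pCons 0 Q) = f * phi f Q"
  by (simp add: phi_pCons)

lemma dy_phi: "pderiv (phi f Q) = phi f (pderiv Q) * pderiv f"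
proof (induction Q)
  case 0
  then show ?case by (simp add: phi_def)
next
  case (pCons a Q)
  have "pderiv (phi f (pCons a Q)) = f * pderiv (phi f Q) + phi f Q * pderiv f"
    by (simp add: phi_pCons pderiv_add pderiv_mult)
  also have "\<dots> = phi f (pderiv (pCons a Q)) * pderiv f"
    by (simp add: pCons.IH pderiv_pCons rhom_add[OF rhom_phi] phi_pCons0 algebra_simps)
  finally show ?case .
qed

lemma dx_phi: "dx (phi f Q) = phi f (pderiv Q) * dx f + phi f (map_poly pderiv Q)"
proof (induction Q)
  case 0
  then show ?case by (simp add: phi_def dx_def)
next
  case (pCons a Q)
  have "dx (phi f (pCons a Q)) = [:pderiv a:] + dx f * phi f Q + f * dx (phi f Q)"
    by (simp add: phi_pCons dx_add dx_mult dx_const)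
  also have "\<dots> = phi f (pderiv (pCons a Q)) * dx f + phi f (map_poly pderiv (pCons a Q))"
    by (simp add: pCons.IH pderiv_pCons rhom_add[OF rhom_phi] phi_pCons0 phi_pCons
        map_poly_pCons algebra_simps)
  finally show ?case .
qed

lemma Dstep:
  fixes \<pi> f :: bipoly
  assumes pr: "prime_elem \<pi>" and deg: "degree \<pi> > 0"
    and fx: "\<pi> dvd dx f" and fy: "\<pi> dvd pderiv f"
    and dQ: "\<pi> dvd phi f Q"
  shows "\<pi> dvd phi f (map_poly pderiv Q)"
proof -
  define D where "D h = pderiv \<pi> * dx h - dx \<pi> * pderiv h" for h
  obtain h where h: "phi f Q = \<pi> * h" using dQ by blast
  have "D (\<pi> * h) = \<pi> * D h"
    unfolding D_def by (simp add: dx_mult pderiv_mult algebra_simps)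
  then have "\<pi> dvd D (phi f Q)" using h by simp
  moreover have "D (phi f Q) = phi f (pderiv Q) * (pderiv \<pi> * dx f - dx \<pi> * pderiv f)
      + pderiv \<pi> * phi f (map_poly pderiv Q)"
    unfolding D_def by (simp add: dx_phi dy_phi algebra_simps)
  moreover have "\<pi> dvd phi f (pderiv Q) * (pderiv \<pi> * dx f - dx \<pi> * pderiv f)"
    using fx fy by (intro dvd_mult dvd_diff) auto
  ultimately have "\<pi> dvd pderiv \<pi> * phi f (map_poly pderiv Q)"
    by (metis dvd_add_right_iff)
  then have "\<pi> dvd pderiv \<pi> \<or> \<pi> dvd phi f (map_poly pderiv Q)"
    using pr prime_elem_dvd_mult_iff by blast
  moreover have "\<not> \<pi> dvd pderiv \<pi>" using deg by simp
  ultimately show ?thesis by blast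
qed



lemma const2_fun: "const2 = (\<lambda>x. [:[:x:]:])"
  by (simp add: fun_eq_iff const2_def)

lemma Fac:
  fixes \<pi> f :: bipoly
  assumes pr: "prime_elem \<pi>" and P0: "P \<noteq> 0" and dv: "\<pi> dvd subst_bipoly P f"
  shows "\<exists>c. \<pi> dvd f - const2 c"
proof -
  have "P = smult (lead_coeff P) (\<Prod>x\<in>#proots P. [:-x, 1:])"
    using complex_poly_decompose_multiset[of P] by simp
  also have "\<dots> = [:lead_coeff P:] * (\<Prod>x\<in>#proots P. [:-x, 1:])" by simp
  finally have "subst_bipoly P f = subst_bipoly ([:lead_coeff P:] * (\<Prod>x\<in>#proots P. [:-x, 1:])) f"
    by simp
  also have "\<dots> = subst_bipoly [:lead_coeff P:] f * subst_bipoly (\<Prod>x\<in>#proots P. [:-x, 1:]) f"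
    by (rule rhom_mult[OF rhom_S])
  also have "subst_bipoly (\<Prod>x\<in>#proots P. [:-x, 1:]) f = (\<Prod>x\<in>#proots P. f - const2 x)"
    by (simp only: rhom_prod_mset[OF rhom_S] S_lin)
  also have "subst_bipoly [:lead_coeff P:] f = const2 (lead_coeff P)"
    by (simp add: subst_bipoly_def map_poly_pCons const2_def)
  finally have dv2: "\<pi> dvd const2 (lead_coeff P) * (\<Prod>x\<in>#proots P. f - const2 x)"
    using dv by simp
  have "\<not> \<pi> dvd const2 (lead_coeff P)"
  proof
    assume "\<pi> dvd const2 (lead_coeff P)"
    moreover have "is_unit (const2 (lead_coeff P))"
      using P0 by (simp add: const2_def is_unit_const_poly_iff dvd_field_iff)
    ultimately have "is_unit \<pi>" by (rule dvd_unit_imp_unit)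
    then show False using pr prime_elem_not_unit by blast
  qed
  with dv2 pr have "\<pi> dvd (\<Prod>x\<in>#proots P. f - const2 x)"
    using prime_elem_dvd_mult_iff by blast
  then obtain a where "a \<in># image_mset (\<lambda>x. f - const2 x) (proots P)" "\<pi> dvd a"
    using prime_elem_dvd_prod_msetE[OF pr] by blast
  then show ?thesis by auto
qed

lemma Dconst:
  fixes \<pi> f :: bipoly
  assumes pr: "prime_elem \<pi>" and deg: "degree \<pi> > 0"
    and fx: "\<pi> dvd dx f" and fy: "\<pi> dvd pderiv f"
  shows "Q \<noteq> 0 \<Longrightarrow> \<pi> dvd phi f Q \<Longrightarrow> \<exists>P. P \<noteq> 0 \<and> \<pi> dvd subst_bipoly P f"
proof (induction "\<Sum>i\<le>degree Q. degree (coeff Q i)" arbitrary: Q rule: less_induct)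
  case less
  show ?case
  proof (cases "\<forall>i\<le>degree Q. degree (coeff Q i) = 0")
    case True
    define P where "P = map_poly (\<lambda>c. coeff c 0) Q"
    have QP: "Q = map_poly (\<lambda>c. [:c:]) P"
    proof (rule poly_eqI)
      fix n
      show "coeff Q n = coeff (map_poly (\<lambda>c. [:c:]) P) n"
      proof (cases "n \<le> degree Q")
        case True
        then have "degree (coeff Q n) = 0" using \<open>\<forall>i\<le>degree Q. _\<close> by blast
        then show ?thesis unfolding P_def by (simp add: coeff_map_poly degree_0_id)
      next
        case False
        then show ?thesis unfolding P_def by (simp add: coeff_map_poly coeff_eq_0)
      qed
    qed
    have "P \<noteq> 0" using less.prems(1) QP by auto
    moreover have "phi f Q = subst_bipoly P f"
      unfolding QP phi_def subst_bipoly_def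
      by (simp add: map_poly_map_poly o_def const2_fun)
    ultimately show ?thesis using less.prems(2) by auto
  next
    case False
    then obtain i where i: "i \<le> degree Q" "degree (coeff Q i) > 0" by auto
    define Q' where "Q' = map_poly pderiv Q"
    have cQ': "coeff Q' n = pderiv (coeff Q n)" for n
      unfolding Q'_def by (simp add: coeff_map_poly)
    have dQ': "\<pi> dvd phi f Q'" unfolding Q'_def by (rule Dstep[OF pr deg fx fy less.prems(2)])
    have Q'0: "Q' \<noteq> 0"
    proof
      assume "Q' = 0"
      then have "pderiv (coeff Q i) = 0" using cQ'[of i] by simp
      then show False using i by (simp add: pderiv_eq_0_iff)
    qed
    have degle: "degree Q' \<le> degree Q" unfolding Q'_def by (rule map_poly_degree_leq)
    have "(\<Sum>i\<le>degree Q'. degree (coeff Q' i)) = (\<Sum>i\<le>degree Q. degree (coeff Q' i))"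
      by (rule sum.mono_neutral_left) (use degle in \<open>auto simp: coeff_eq_0\<close>)
    also have "\<dots> < (\<Sum>i\<le>degree Q. degree (coeff Q i))"
    proof (rule sum_strict_mono_ex1)
      show "\<exists>a\<in>{..degree Q}. degree (coeff Q' a) < degree (coeff Q a)"
        using i by (intro bexI[of _ i]) (auto simp: cQ' degree_pderiv)
    qed (auto simp: cQ' degree_pderiv)
    finally show ?thesis using less.hyps[OF _ Q'0 dQ'] by blast
  qed
qed



lemma rhom_eval2: "rhom (\<lambda>h. eval2 h a b)"
  unfolding eval2_def by (rule rhom_comp[OF rhom_evx rhom_poly_eval])

lemma eval2_const2 [simp]: "eval2 (const2 c) a b = c"
  by (simp add: eval2_def const2_def map_poly_pCons)

lemma eval2_subst: "eval2 (subst_bipoly m f) a b = poly m (eval2 f a b)"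
proof -
  have "eval2 (subst_bipoly m f) a b = poly (map_poly (\<lambda>h. eval2 h a b) (map_poly const2 m)) (eval2 f a b)"
    unfolding subst_bipoly_def by (rule rhom_poly_hom[OF rhom_eval2])
  also have "map_poly (\<lambda>h. eval2 h a b) (map_poly const2 m) = m"
    by (simp add: map_poly_map_poly o_def rhom_0[OF rhom_const2] rhom_0[OF rhom_eval2])
  finally show ?thesis .
qed

lemma rhom_dvd: "rhom h \<Longrightarrow> a dvd b \<Longrightarrow> h a dvd h b"
  by (metis dvdE dvdI rhom_mult)

lemma eval2_dvd_zero: "a dvd b \<Longrightarrow> eval2 a x y = 0 \<Longrightarrow> eval2 b x y = 0"
  by (metis dvdE mult_zero_left rhom_mult[OF rhom_eval2])

lemma lemE:
  fixes l :: "complex poly poly"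
  assumes "l \<noteq> 0" shows "\<exists>c0. poly l [:c0:] \<noteq> 0"
proof -
  obtain i where i: "coeff l i \<noteq> 0" using assms by (metis leading_coeff_0_iff)
  obtain x0 where x0: "poly (coeff l i) x0 \<noteq> 0" using i poly_all_0_iff_0 by blast
  define l' where "l' = map_poly (\<lambda>e. poly e x0) l"
  have "coeff l' i \<noteq> 0" unfolding l'_def using x0 by (simp add: coeff_map_poly)
  then have "l' \<noteq> 0" by auto
  then obtain c0 where c0: "poly l' c0 \<noteq> 0" using poly_all_0_iff_0 by blast
  have "poly (poly l [:c0:]) x0 = poly l' c0"
    unfolding l'_def using rhom_poly_hom[OF rhom_poly_eval, of l "[:c0:]" x0] by simp
  then show ?thesis using c0 by (metis poly_0)
qed

lemma nonunit_root:
  fixes p :: "complex poly"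
  assumes "p \<noteq> 0" "\<not> is_unit p" shows "\<exists>a. poly p a = 0"
proof -
  have "degree p \<noteq> 0"
  proof
    assume "degree p = 0"
    then have "p = [:coeff p 0:]" by (simp add: degree_0_id)
    then show False using assms by (metis dvd_field_iff is_unit_const_poly_iff pCons_0_0)
  qed
  then show ?thesis using fundamental_theorem_of_algebra[of p] by (simp add: constant_degree)
qed

lemma lemZ:
  fixes \<pi> :: bipoly
  assumes nz: "\<pi> \<noteq> 0" and nu: "\<not> is_unit \<pi>" shows "\<exists>a b. eval2 \<pi> a b = 0"
proof (cases "degree \<pi> = 0")
  case True
  then have pi: "\<pi> = [:coeff \<pi> 0:]" by (simp add: degree_0_id)
  have "coeff \<pi> 0 \<noteq> 0" using nz pi by (metis pCons_0_0)
  moreover have "\<not> is_unit (coeff \<pi> 0)" using nu pi by (metis is_unit_const_poly_iff)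
  ultimately obtain a where "poly (coeff \<pi> 0) a = 0" using nonunit_root by blast
  then have "eval2 \<pi> a 0 = 0" by (subst pi) (simp add: eval2_def map_poly_pCons)
  then show ?thesis by blast
next
  case False
  have "lead_coeff \<pi> \<noteq> 0" using nz by simp
  then obtain a where a: "poly (lead_coeff \<pi>) a \<noteq> 0" using poly_all_0_iff_0 by blast
  have "coeff (evx a \<pi>) (degree \<pi>) \<noteq> 0" using a by (simp add: coeff_map_poly)
  then have "degree (evx a \<pi>) \<ge> degree \<pi>" by (rule le_degree)
  then have "degree (evx a \<pi>) \<noteq> 0" using False by linarith
  then obtain b where "poly (evx a \<pi>) b = 0"
    using fundamental_theorem_of_algebra[of "evx a \<pi>"] by (auto simp: constant_degree)
  then show ?thesis unfolding eval2_def by blast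
qed



lemma prime_dvd_of_dvd:
  fixes \<pi> X :: "'a::{idom,algebraic_semidom}"
  assumes pr: "prime_elem \<pi>" and nu: "\<not> is_unit X" and d: "X dvd \<pi>" shows "\<pi> dvd X"
proof -
  obtain u where u: "\<pi> = X * u" using d by blast
  have "irreducible \<pi>" using pr by (rule prime_elem_imp_irreducible)
  then have "is_unit X \<or> is_unit u" using u by (auto dest: irreducibleD)
  then have "is_unit u" using nu by blast
  then show ?thesis using u by (simp add: mult_unit_dvd_iff)
qed

lemma Ccase0:
  fixes \<pi> f :: bipoly
  assumes pr: "prime_elem \<pi>" and deg: "degree \<pi> = 0" and fy: "\<pi> dvd dy f"
  shows "\<exists>c. \<pi> dvd f - const2 c"
proof -
  have pi: "\<pi> = [:coeff \<pi> 0:]" using deg by (simp add: degree_0_id)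
  have "\<pi> \<noteq> 0" using pr by auto
  then have "coeff \<pi> 0 \<noteq> 0" using pi by (metis pCons_0_0)
  moreover have "\<not> is_unit (coeff \<pi> 0)" using pr pi by (metis is_unit_const_poly_iff prime_elem_not_unit)
  ultimately obtain \<alpha> where "poly (coeff \<pi> 0) \<alpha> = 0" using nonunit_root by blast
  then have "[:-\<alpha>, 1:] dvd coeff \<pi> 0" by (simp add: poly_eq_0_iff_dvd)
  then have X\<pi>: "[:[:-\<alpha>, 1:]:] dvd \<pi>" by (subst pi) simp
  then have "[:[:-\<alpha>, 1:]:] dvd pderiv f" using fy unfolding dy_def by (rule dvd_trans)
  then have "evx \<alpha> [:[:-\<alpha>, 1:]:] dvd evx \<alpha> (pderiv f)" by (rule rhom_dvd[OF rhom_evx])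
  moreover have "evx \<alpha> [:[:-\<alpha>, 1:]:] = 0" by (simp add: map_poly_pCons)
  ultimately have "evx \<alpha> (pderiv f) = 0" by simp
  then have "pderiv (evx \<alpha> f) = 0" by (simp add: rhom_pderiv[OF rhom_poly_eval])
  then have "degree (evx \<alpha> f) = 0" by (simp add: pderiv_eq_0_iff)
  then have ef: "evx \<alpha> f = [:coeff (evx \<alpha> f) 0:]" by (simp add: degree_0_id)
  define c where "c = coeff (evx \<alpha> f) 0"
  have "evx \<alpha> (f - const2 c) = evx \<alpha> f - evx \<alpha> (const2 c)" by (rule rhom_diff[OF rhom_evx])
  also have "evx \<alpha> (const2 c) = [:c:]" by (simp add: const2_def map_poly_pCons)
  finally have "evx \<alpha> (f - const2 c) = 0" using ef c_def by simp
  then have "[:[:-\<alpha>, 1:]:] dvd f - const2 c" by (rule K0)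
  moreover have "\<pi> dvd [:[:-\<alpha>, 1:]:]" by (rule prime_dvd_of_dvd[OF pr X2_not_unit X\<pi>])
  ultimately show ?thesis by (meson dvd_trans)
qed

lemma phi_0 [simp]: "phi f 0 = 0"
  by (simp add: phi_def)

lemma phi_const: "phi f [:c:] = [:c:]"
  by (simp add: phi_pCons)

lemma Ccase1:
  fixes \<pi> f :: bipoly
  assumes pr: "prime_elem \<pi>" and deg: "degree \<pi> > 0" and fx: "\<pi> dvd dx f" and fy: "\<pi> dvd dy f"
  shows "\<exists>c. \<pi> dvd f - const2 c"
proof (rule ccontr)
  assume nc: "\<not> (\<exists>c. \<pi> dvd f - const2 c)"
  define gt :: "complex poly poly poly" where "gt = map_poly (\<lambda>c. [:c:]) \<pi>"
  define Ft :: "complex poly poly poly" where "Ft = map_poly (\<lambda>c. [:c:]) f - [:[:0, 1:]:]"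
  have \<pi>0: "\<pi> \<noteq> 0" using pr by auto
  have gt0: "gt \<noteq> 0" unfolding gt_def using \<pi>0 by (simp add: map_poly_eq_0_iff)
  have cd: "degree d = 0" if dg: "d dvd gt" and dF: "d dvd Ft" for d
  proof -
    have degPsi: "degree (map_poly (\<lambda>e. poly e [:c0:]) d) = 0" for c0
    proof -
      define Psi where "Psi = map_poly (\<lambda>e::complex poly poly. poly e [:c0:])"
      have rP: "rhom Psi" unfolding Psi_def by (rule rhom_map_poly[OF rhom_poly_eval])
      have Pgt: "Psi gt = \<pi>" unfolding Psi_def gt_def
        by (simp add: map_poly_map_poly o_def)
      have "Psi [:[:0, 1:]:] = const2 c0" unfolding Psi_def by (simp add: map_poly_pCons const2_def)
      then have PFt: "Psi Ft = f - const2 c0" unfolding Ft_def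
        using rhom_diff[OF rP] Pgt unfolding Psi_def by (simp add: map_poly_map_poly o_def)
      have d1: "Psi d dvd \<pi>" using rhom_dvd[OF rP dg] Pgt by simp
      have d2: "Psi d dvd f - const2 c0" using rhom_dvd[OF rP dF] PFt by simp
      have "is_unit (Psi d)"
      proof (rule ccontr)
        assume "\<not> is_unit (Psi d)"
        then have "\<pi> dvd Psi d" by (rule prime_dvd_of_dvd[OF pr _ d1])
        then show False using d2 nc by (meson dvd_trans)
      qed
      then show ?thesis unfolding Psi_def by (auto simp: is_unit_poly_iff)
    qed
    show ?thesis
    proof (rule ccontr)
      assume "degree d \<noteq> 0"
      then have "d \<noteq> 0" by auto
      then have "lead_coeff d \<noteq> 0" by simp
      then obtain c0 where c0: "poly (lead_coeff d) [:c0:] \<noteq> 0" using lemE by blast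
      have "coeff (map_poly (\<lambda>e. poly e [:c0:]) d) (degree d) \<noteq> 0"
        using c0 by (simp add: coeff_map_poly)
      then have "degree (map_poly (\<lambda>e. poly e [:c0:]) d) \<ge> degree d" by (rule le_degree)
      then show False using degPsi[of c0] \<open>degree d \<noteq> 0\<close> by simp
    qed
  qed
  obtain r A B where r0: "r \<noteq> 0" and rAB: "A * gt + B * Ft = [:r:]"
    using L1[of gt Ft] gt0 cd by blast
  define Phi where "Phi = (\<lambda>h::complex poly poly poly. poly (map_poly (phi f) h) [:0, 1:])"
  have rPhi: "rhom Phi" unfolding Phi_def
    by (rule rhom_comp[OF rhom_map_poly[OF rhom_phi] rhom_poly_eval])
  have "Phi gt = poly (map_poly (\<lambda>c. [:c:]) \<pi>) [:0, 1:]"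
    unfolding Phi_def gt_def by (simp add: map_poly_map_poly o_def phi_const)
  also have "\<dots> = \<pi>" by (metis pcompose_altdef pcompose_idR)
  finally have Pgt: "Phi gt = \<pi>" .
  have "Phi [:[:0, 1:]:] = f" unfolding Phi_def by (simp add: map_poly_pCons phi_pCons)
  then have PFt: "Phi Ft = 0" unfolding Ft_def
    using Pgt rhom_diff[OF rPhi] unfolding Phi_def gt_def
    by (simp add: map_poly_map_poly o_def phi_const pcompose_altdef[symmetric])
  have "Phi [:r:] = phi f r" unfolding Phi_def by (simp add: map_poly_pCons rhom_0[OF rhom_phi])
  then have "phi f r = Phi A * \<pi>"
    using rAB Pgt PFt by (metis rhom_add[OF rPhi] rhom_mult[OF rPhi] mult_zero_right add_0_right)
  then have "\<pi> dvd phi f r" by simp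
  then obtain P where "P \<noteq> 0" "\<pi> dvd subst_bipoly P f"
    using Dconst[OF pr deg fx fy[unfolded dy_def] r0] by blast
  then show False using Fac[OF pr] nc by blast
qed

lemma lemC:
  fixes \<pi> f :: bipoly
  assumes pr: "prime_elem \<pi>" and fx: "\<pi> dvd dx f" and fy: "\<pi> dvd dy f"
  shows "\<exists>c. \<pi> dvd f - const2 c"
  using Ccase0[OF pr _ fy] Ccase1[OF pr _ fx fy] by blast



lemma prod_mset_dvd_each:
  assumes "\<And>x. x \<in># M \<Longrightarrow> F x dvd G x"
  shows "(\<Prod>x\<in>#M. F x) dvd (\<Prod>x\<in>#M. G x)"
  using assms by (induction M) (auto intro: mult_dvd_mono)

lemma deriv_nz:
  fixes f :: bipoly
  assumes "\<nexists>c. f = const2 c"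
  shows "dx f \<noteq> 0 \<or> dy f \<noteq> 0"
proof (rule ccontr)
  assume "\<not> (dx f \<noteq> 0 \<or> dy f \<noteq> 0)"
  then have x: "dx f = 0" and y: "pderiv f = 0" by (auto simp: dy_def)
  from y have "degree f = 0" by (simp add: pderiv_eq_0_iff)
  then have f: "f = [:coeff f 0:]" by (simp add: degree_0_id)
  have "dx f = [:pderiv (coeff f 0):]" by (subst f) (rule dx_const)
  then have "pderiv (coeff f 0) = 0" using x by simp
  then have "degree (coeff f 0) = 0" by (simp add: pderiv_eq_0_iff)
  then have "coeff f 0 = [:coeff (coeff f 0) 0:]" by (simp add: degree_0_id)
  then have "f = const2 (coeff (coeff f 0) 0)" using f unfolding const2_def by metis
  then show False using assms by blast
qed

theorem proposition1:
  fixes f :: bipoly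
  assumes "\<nexists>c. f = const2 c"
  shows "\<exists>m :: complex poly.
           in_gradient_ideal (subst_bipoly m f) f \<and>
           (\<forall>c. poly m c = 0 \<longleftrightarrow> critical_value f c)"
proof -
  have nz: "dx f \<noteq> 0 \<or> dy f \<noteq> 0" using deriv_nz[OF assms] .
  define g where "g = gcd (dx f) (dy f)"
  define p where "p = dx f div g"
  define q where "q = dy f div g"
  have g0: "g \<noteq> 0" unfolding g_def using nz by simp
  have cop: "coprime p q" unfolding p_def q_def g_def by (rule div_gcd_coprime[OF nz])
  have gx: "g dvd dx f" and gy: "g dvd dy f" unfolding g_def by auto
  have fxp: "dx f = g * p" unfolding p_def using gx by simp
  have fyq: "dy f = g * q" unfolding q_def using gy by simp
  obtain m0 a b where m0ab: "subst_bipoly m0 f = a * p + b * q"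
    and m0r: "\<And>c. poly m0 c = 0 \<Longrightarrow> \<exists>\<alpha> \<beta>. eval2 p \<alpha> \<beta> = 0 \<and> eval2 q \<alpha> \<beta> = 0 \<and> eval2 f \<alpha> \<beta> = c"
    using M0[OF cop, of f] by blast
  define PF where "PF = prime_factorization g"
  have PFprop: "prime_elem \<pi> \<and> \<pi> dvd dx f \<and> \<pi> dvd dy f" if "\<pi> \<in># PF" for \<pi>
  proof -
    have "prime \<pi>" using that unfolding PF_def by (rule in_prime_factors_imp_prime)
    moreover have "\<pi> dvd g" using that unfolding PF_def by (rule in_prime_factors_imp_dvd)
    ultimately show ?thesis using gx gy by (auto intro: dvd_trans)
  qed
  define cf where "cf \<pi> = (SOME c. \<pi> dvd f - const2 c)" for \<pi>
  have cfprop: "\<pi> dvd f - const2 (cf \<pi>)" if "\<pi> \<in># PF" for \<pi>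
  proof -
    have "\<exists>c. \<pi> dvd f - const2 c" using PFprop[OF that] lemC by blast
    then show ?thesis unfolding cf_def by (rule someI_ex)
  qed
  define m2 where "m2 = (\<Prod>\<pi>\<in>#PF. [:-cf \<pi>, 1:])"
  have Sm2: "subst_bipoly m2 f = (\<Prod>\<pi>\<in>#PF. f - const2 (cf \<pi>))"
    unfolding m2_def by (simp only: rhom_prod_mset[OF rhom_S] S_lin)
  have "(\<Prod>\<pi>\<in>#PF. \<pi>) dvd (\<Prod>\<pi>\<in>#PF. f - const2 (cf \<pi>))"
    by (rule prod_mset_dvd_each) (rule cfprop)
  moreover have "normalize (\<Prod>\<pi>\<in>#PF. \<pi>) = normalize g"
    unfolding PF_def using g0 by (simp add: prod_mset_prime_factorization_weak)
  then have "g dvd (\<Prod>\<pi>\<in>#PF. \<pi>)"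
    by (metis dvd_normalize_iff dvd_refl)
  ultimately have "g dvd subst_bipoly m2 f" using Sm2 by (metis dvd_trans)
  then obtain k where k: "subst_bipoly m2 f = g * k" by blast
  define m where "m = m0 * m2"
  have "subst_bipoly m f = subst_bipoly m0 f * subst_bipoly m2 f"
    unfolding m_def by (rule rhom_mult[OF rhom_S])
  also have "\<dots> = (a * k) * dx f + (b * k) * dy f"
    unfolding m0ab k fxp fyq by (simp add: algebra_simps)
  finally have ideal: "in_gradient_ideal (subst_bipoly m f) f"
    unfolding in_gradient_ideal_def by blast
  have "poly m c = 0 \<longleftrightarrow> critical_value f c" for c
  proof
    assume "poly m c = 0"
    then have "poly m0 c = 0 \<or> poly m2 c = 0" unfolding m_def by simp
    then show "critical_value f c"
    proof
      assume "poly m0 c = 0"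
      then obtain \<alpha> \<beta> where "eval2 p \<alpha> \<beta> = 0" "eval2 q \<alpha> \<beta> = 0" "eval2 f \<alpha> \<beta> = c"
        using m0r by blast
      then show ?thesis unfolding critical_value_def fxp fyq
        by (metis mult_zero_right rhom_mult[OF rhom_eval2])
    next
      assume "poly m2 c = 0"
      then obtain \<pi> where \<pi>: "\<pi> \<in># PF" and c: "c = cf \<pi>"
        unfolding m2_def by (auto simp: poly_prod_mset prod_mset_zero_iff)
      have pe: "prime_elem \<pi>" "\<pi> dvd dx f" "\<pi> dvd dy f" using PFprop[OF \<pi>] by auto
      have "\<pi> \<noteq> 0" "\<not> is_unit \<pi>" using pe(1) by (auto simp: prime_elem_not_unit)
      then obtain x y where xy: "eval2 \<pi> x y = 0" using lemZ by blast
      have "eval2 (f - const2 c) x y = 0" using eval2_dvd_zero[OF cfprop[OF \<pi>] xy] c by simp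
      then have "eval2 f x y = c" by (simp add: rhom_diff[OF rhom_eval2])
      moreover have "eval2 (dx f) x y = 0" "eval2 (dy f) x y = 0"
        using eval2_dvd_zero[OF pe(2) xy] eval2_dvd_zero[OF pe(3) xy] by auto
      ultimately show ?thesis unfolding critical_value_def by blast
    qed
  next
    assume "critical_value f c"
    then obtain x y where xy: "eval2 (dx f) x y = 0" "eval2 (dy f) x y = 0" "eval2 f x y = c"
      unfolding critical_value_def by blast
    obtain A B where AB: "subst_bipoly m f = A * dx f + B * dy f"
      using ideal unfolding in_gradient_ideal_def by blast
    have "eval2 (subst_bipoly m f) x y = 0"
      unfolding AB using xy by (simp add: rhom_add[OF rhom_eval2] rhom_mult[OF rhom_eval2])
    then show "poly m c = 0" using xy(3) by (simp add: eval2_subst)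
  qed
  then show ?thesis using ideal by blast
qed

end
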